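(* In an $m$-partial SCS, let $p$ and $p'$ be the positions of two robots $u$ and $u'$ lying in different rings $r$ and $r'$, respectively, and let $c$ be a crossing point between $r$ and $r'$. Let $d$ and $d'$ be the lengths of the simple paths from $p$ to $c$ in $r$ and from $p'$ to $c$ in $r'$, respectively, and let $2l\pi$ and $2l'\pi$ be the lengths of $r$ and $r'$ ($l,l'$ positive integers). Then: (1) $d-d'\in 2\pi\mathbb{Z}$; (2) writing $d-d'=2\pi s$ with $s\in\mathbb{Z}$, the robots $u$ and $u'$ prevent each other from starving if and only if $\gcd(l,l')$ divides $s$.
   Context: Let $T=\{C_1,\dots,C_n\}$ be pairwise disjoint unit circles in the plane (trajectories) and $\epsilon<0.5$ a communication range. The graph of potential links $G_\epsilon(T)$ has the circle centers as nodes and an edge $\{i,j\}$ whenever the centers of $C_i,C_j$ are at distance at most $2+\epsilon$; it is assumed connected. Points of a circle are identified with angles (modulo $2\pi$), and a robot traverses a circle in one time unit. A schedule is a pair $(f,g)$, $f:T\to[0,2\pi)$, $g:T\to\{-1,1\}$ ($1$ = counterclockwise); the robot on $C_i$ is at angle $f(C_i)+2\pi g(C_i)t$ at time $t$. A communication graph $G=(V,E)$ is a connected spanning subgraph of $G_\epsilon(T)$. The link position $\phi_{ij}$ is the point of $C_i$ closest to $C_j$. A schedule is $G$-synchronized if for every $\{i,j\}\in E$ the robot on $C_i$ is at $\phi_{ij}$ exactly when the robot on $C_j$ is at $\phi_{ji}$. An SCS with communication graph $G$ consists of $n$ robots, one per circle, moving under a $G$-synchronized schedule with $g(C_i)=-g(C_j)$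 for all $\{i,j\}\in E$. Shifting protocol: when a robot on $C_i$ reaches $\phi_{ij}$ and there is no robot at $\phi_{ji}$, it moves to $C_j$ and thereafter follows the schedule of $C_j$. An $m$-partial SCS is obtained by removing $n-m$ robots, the remaining $m$ applying the shifting protocol. A surviving robot starves if every time it arrives at a link position the corresponding neighbor is absent. A ring is the closed path traversed by a starving robot (following the assigned direction on each circle and always shifting to the neighboring circle at link positions); rings are pairwise disjoint, and ring lengths are positive integer multiples of $2\pi$. The length of a path along a ring is the total length of circle arcs it traverses, counted with multiplicity and ignoring transitions between circles. A path in a ring from $p$ to $q$ follows the ring's travel direction and may include full tours; it is simple if it contains no full tour. The crossing point of neighboring circles $C_i,C_j$ is the midpoint of the segment joining $\phi_{ij}$ and $\phi_{ji}$. A robot $u'$ in ring $r'$ prevents a robot $u$ in ring $r$ from starving if there is a crossing point $c$ between $r$ and $r'$ and two paths of equal length, one from the position of $u$ to $c$ in $r$ and one from the position of $u'$ to $c$ in $r'$ (each possibly longer than the ring); this relation is symmetric. *)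

theory Defs
  imports Complex_Main
begin

text \<open>Circles C_0, ..., C_(n-1) are unit circles with centres z i (in the complex plane).
  A schedule is given by f (initial angle) and g (direction, 1 or -1).\<close>

definition potential_links :: "nat \<Rightarrow> (nat \<Rightarrow> complex) \<Rightarrow> real \<Rightarrow> (nat \<times> nat) set" where
  "potential_links n z eps =
     {(i, j). i < n \<and> j < n \<and> i \<noteq> j \<and> cmod (z i - z j) \<le> 2 + eps}"

definition pos :: "(nat \<Rightarrow> complex) \<Rightarrow> (nat \<Rightarrow> real) \<Rightarrow> (nat \<Rightarrow> int) \<Rightarrow> nat \<Rightarrow> real \<Rightarrow> complex" where
  "pos z f g i t = z i + cis (f i + 2 * pi * of_int (g i) * t)"

text \<open>Link position phi_ij: the point of C_i closest to C_j.\<close>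
definition linkpt :: "(nat \<Rightarrow> complex) \<Rightarrow> nat \<Rightarrow> nat \<Rightarrow> complex" where
  "linkpt z i j = z i + (z j - z i) / complex_of_real (cmod (z j - z i))"

definition at_link :: "(nat \<Rightarrow> complex) \<Rightarrow> (nat \<Rightarrow> real) \<Rightarrow> (nat \<Rightarrow> int) \<Rightarrow> nat \<Rightarrow> nat \<Rightarrow> real \<Rightarrow> bool" where
  "at_link z f g i j t \<longleftrightarrow> pos z f g i t = linkpt z i j"

definition crossing :: "(nat \<Rightarrow> complex) \<Rightarrow> nat \<Rightarrow> nat \<Rightarrow> complex" where
  "crossing z i j = (linkpt z i j + linkpt z j i) / 2"

definition SCS :: "nat \<Rightarrow> (nat \<Rightarrow> complex) \<Rightarrow> real \<Rightarrow> (nat \<times> nat) set \<Rightarrow>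
    (nat \<Rightarrow> real) \<Rightarrow> (nat \<Rightarrow> int) \<Rightarrow> bool" where
  "SCS n z eps E f g \<longleftrightarrow>
     (\<forall>i<n. \<forall>j<n. i \<noteq> j \<longrightarrow> cmod (z i - z j) > 2) \<and>
     eps < 1/2 \<and>
     (\<forall>i<n. \<forall>j<n. (i, j) \<in> (potential_links n z eps)\<^sup>*) \<and>
     E \<subseteq> potential_links n z eps \<and> sym E \<and>
     (\<forall>i<n. \<forall>j<n. (i, j) \<in> E\<^sup>*) \<and>
     (\<forall>i<n. 0 \<le> f i \<and> f i < 2 * pi \<and> (g i = 1 \<or> g i = -1)) \<and>
     (\<forall>(i, j)\<in>E. \<forall>t. at_link z f g i j t \<longleftrightarrow> at_link z f g j i t) \<and>
     (\<forall>(i, j)\<in>E. g i = - g j)"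

text \<open>Dynamics of a starving robot (always shifting at link positions).
  A state (k, t) means: the robot is on circle k at time t (having arrived at
  time t if t is a shifting time).\<close>
definition next_time :: "(nat \<Rightarrow> complex) \<Rightarrow> (nat \<times> nat) set \<Rightarrow> (nat \<Rightarrow> real) \<Rightarrow> (nat \<Rightarrow> int)
    \<Rightarrow> nat \<Rightarrow> real \<Rightarrow> real" where
  "next_time z E f g k t = (LEAST t'. t < t' \<and> (\<exists>j. (k, j) \<in> E \<and> at_link z f g k j t'))"

definition next_circ :: "(nat \<Rightarrow> complex) \<Rightarrow> (nat \<times> nat) set \<Rightarrow> (nat \<Rightarrow> real) \<Rightarrow> (nat \<Rightarrow> int)
    \<Rightarrow> nat \<Rightarrow> real \<Rightarrow> nat" where
  "next_circ z E f g k t = (THE j. (k, j) \<in> E \<and> at_link z f g k j (next_time z E f g k t))"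

definition ring_step :: "(nat \<Rightarrow> complex) \<Rightarrow> (nat \<times> nat) set \<Rightarrow> (nat \<Rightarrow> real) \<Rightarrow> (nat \<Rightarrow> int)
    \<Rightarrow> nat \<times> real \<Rightarrow> nat \<times> real" where
  "ring_step z E f g = (\<lambda>(k, t). (next_circ z E f g k t, next_time z E f g k t))"

definition traj :: "(nat \<Rightarrow> complex) \<Rightarrow> (nat \<times> nat) set \<Rightarrow> (nat \<Rightarrow> real) \<Rightarrow> (nat \<Rightarrow> int)
    \<Rightarrow> nat \<Rightarrow> real \<Rightarrow> nat \<Rightarrow> nat \<times> real" where
  "traj z E f g i t0 m = (ring_step z E f g ^^ m) (i, t0)"

definition on_circ_at :: "(nat \<Rightarrow> complex) \<Rightarrow> (nat \<times> nat) set \<Rightarrow> (nat \<Rightarrow> real) \<Rightarrow> (nat \<Rightarrow> int)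
    \<Rightarrow> nat \<Rightarrow> real \<Rightarrow> real \<Rightarrow> nat \<Rightarrow> bool" where
  "on_circ_at z E f g i t0 tau k \<longleftrightarrow>
     (\<exists>m. fst (traj z E f g i t0 m) = k \<and> snd (traj z E f g i t0 m) \<le> tau
          \<and> tau < snd (traj z E f g i t0 (Suc m)))"

text \<open>The ring through the position (circle i at time t0), as a set of points
  (circle, phase); the point of circle k with phase frac tau is pos z f g k tau.\<close>
definition ring :: "(nat \<Rightarrow> complex) \<Rightarrow> (nat \<times> nat) set \<Rightarrow> (nat \<Rightarrow> real) \<Rightarrow> (nat \<Rightarrow> int)
    \<Rightarrow> nat \<Rightarrow> real \<Rightarrow> (nat \<times> real) set" where
  "ring z E f g i t0 = {(k, frac tau) | k tau. t0 \<le> tau \<and> on_circ_at z E f g i t0 tau k}"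

definition ring_len :: "(nat \<Rightarrow> complex) \<Rightarrow> (nat \<times> nat) set \<Rightarrow> (nat \<Rightarrow> real) \<Rightarrow> (nat \<Rightarrow> int)
    \<Rightarrow> nat \<Rightarrow> real \<Rightarrow> real" where
  "ring_len z E f g i t0 =
     2 * pi * real (LEAST l::nat. 0 < l \<and> on_circ_at z E f g i t0 (t0 + real l) i)"

text \<open>Lengths of all paths (possibly with full tours) along the ring from the
  position (circle i at time t0) to the point c, where c is passed when
  shifting between two circles whose crossing point is c.  Since robots move
  with angular speed 2 pi, arc length equals 2 pi times elapsed time.\<close>
definition path_lens :: "(nat \<Rightarrow> complex) \<Rightarrow> (nat \<times> nat) set \<Rightarrow> (nat \<Rightarrow> real) \<Rightarrow> (nat \<Rightarrow> int)
    \<Rightarrow> nat \<Rightarrow> real \<Rightarrow> complex \<Rightarrow> real set" where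
  "path_lens z E f g i t0 c =
     {L. \<exists>m. snd (traj z E f g i t0 (Suc m)) = t0 + L / (2 * pi) \<and>
            crossing z (fst (traj z E f g i t0 m)) (fst (traj z E f g i t0 (Suc m))) = c}"

text \<open>Length of the simple path (no full tour) = the shortest such path.\<close>
definition simple_dist :: "(nat \<Rightarrow> complex) \<Rightarrow> (nat \<times> nat) set \<Rightarrow> (nat \<Rightarrow> real) \<Rightarrow> (nat \<Rightarrow> int)
    \<Rightarrow> nat \<Rightarrow> real \<Rightarrow> complex \<Rightarrow> real" where
  "simple_dist z E f g i t0 c = (LEAST L. L \<in> path_lens z E f g i t0 c)"

definition crossing_between :: "(nat \<Rightarrow> complex) \<Rightarrow> (nat \<times> nat) set \<Rightarrow> (nat \<Rightarrow> real) \<Rightarrow> (nat \<Rightarrow> int)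
    \<Rightarrow> nat \<Rightarrow> nat \<Rightarrow> real \<Rightarrow> complex \<Rightarrow> bool" where
  "crossing_between z E f g i i' t0 c \<longleftrightarrow>
     (\<exists>a b. (a, b) \<in> E \<and> c = crossing z a b) \<and>
     path_lens z E f g i t0 c \<noteq> {} \<and> path_lens z E f g i' t0 c \<noteq> {}"

definition prevents_via :: "(nat \<Rightarrow> complex) \<Rightarrow> (nat \<times> nat) set \<Rightarrow> (nat \<Rightarrow> real) \<Rightarrow> (nat \<Rightarrow> int)
    \<Rightarrow> nat \<Rightarrow> nat \<Rightarrow> real \<Rightarrow> complex \<Rightarrow> bool" where
  "prevents_via z E f g i i' t0 c \<longleftrightarrow>
     (\<exists>L. L \<in> path_lens z E f g i t0 c \<and> L \<in> path_lens z E f g i' t0 c)"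

end

theory Submission
  imports Defs "HOL-Library.Real_Mod"
begin

locale scs =
  fixes n :: nat and z :: "nat \<Rightarrow> complex" and eps :: real
    and E :: "(nat \<times> nat) set" and f :: "nat \<Rightarrow> real" and g :: "nat \<Rightarrow> int"
  assumes S: "SCS n z eps E f g" and Ene: "E \<noteq> {}"
begin

lemma dist2: "i<n \<Longrightarrow> j<n \<Longrightarrow> i\<noteq>j \<Longrightarrow> 2 < cmod (z i - z j)"
  using S unfolding SCS_def by blast

lemma epsl: "eps < 1/2"
  using S unfolding SCS_def by blast

lemma edge: "(i,j)\<in>E \<Longrightarrow> i<n \<and> j<n \<and> i\<noteq>j \<and> cmod (z i - z j) \<le> 2+eps"
  using S unfolding SCS_def potential_links_def by blast

lemma symE: "(i,j)\<in>E \<Longrightarrow> (j,i)\<in>E"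
  using S unfolding SCS_def sym_def by blast

lemma gpm: "i<n \<Longrightarrow> g i = 1 \<or> g i = -1"
  using S unfolding SCS_def by blast

lemma sync: "(i,j)\<in>E \<Longrightarrow> at_link z f g i j t \<longleftrightarrow> at_link z f g j i t"
  using S unfolding SCS_def by blast

lemma conn: "i<n \<Longrightarrow> j<n \<Longrightarrow> (i,j)\<in>E\<^sup>*"
  using S unfolding SCS_def by blast

lemma has_nb: assumes "k<n" shows "\<exists>j. (k,j)\<in>E"
proof -
  obtain a b where ab: "(a,b)\<in>E" using Ene by auto
  then have "a<n" "b<n" "a\<noteq>b" using edge by auto
  then obtain k' where k': "k'<n" "k'\<noteq>k" by metis
  have "(k,k')\<in>E\<^sup>*" using conn assms k' by blast
  then show ?thesis using k'(2) by (metis converse_rtranclE)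
qed

lemma at_link_iff: "at_link z f g k j t \<longleftrightarrow> cis (f k + 2 * pi * of_int (g k) * t) = (z j - z k) / complex_of_real (cmod (z j - z k))"
  unfolding at_link_def pos_def linkpt_def by auto

lemma cis_period: "cis (x + 2 * pi * of_int q) = cis x"
proof -
  have "cis (2 * pi * of_int q) = 1" using cis_eq_1_iff by (metis mult.commute)
  then show ?thesis by (metis cis_mult mult_1_right)
qed

lemma at_link_shift: "at_link z f g k j (t + of_int q) \<longleftrightarrow> at_link z f g k j t"
proof -
  have "f k + 2 * pi * of_int (g k) * (t + of_int q) = (f k + 2 * pi * of_int (g k) * t) + 2 * pi * of_int (g k * q)"
    by (simp add: algebra_simps)
  then show ?thesis unfolding at_link_iff by (simp only: cis_period)
qed

lemma at_link_diff: assumes "k<n" "at_link z f g k j t" "at_link z f g k j t'"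
  shows "\<exists>q::int. t' = t + of_int q"
proof -
  have "cis (f k + 2 * pi * of_int (g k) * t') = cis (f k + 2 * pi * of_int (g k) * t)"
    using assms(2,3) unfolding at_link_iff by simp
  then have "cis ((f k + 2 * pi * of_int (g k) * t') - (f k + 2 * pi * of_int (g k) * t)) = 1"
    by (simp only: cis_divide[symmetric]) simp
  then obtain m where m: "(f k + 2 * pi * of_int (g k) * t') - (f k + 2 * pi * of_int (g k) * t) = of_int m * (2*pi)"
    using cis_eq_1_iff by blast
  then have "2 * pi * (of_int (g k) * (t' - t)) = 2 * pi * of_int m" by (simp add: algebra_simps)
  then have e: "of_int (g k) * (t' - t) = of_int m" by simp
  show ?thesis
  proof (cases "g k = 1")
    case True then show ?thesis using e by (intro exI[of _ m]) simp
  next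
    case False then have "g k = -1" using gpm assms(1) by blast
    then show ?thesis using e by (intro exI[of _ "-m"]) simp
  qed
qed

lemma at_link_ex: assumes "(k,j)\<in>E" shows "\<exists>t. at_link z f g k j t"
proof -
  have k: "k<n" "j<n" "k\<noteq>j" using edge assms by auto
  have ne: "z j - z k \<noteq> 0" using dist2[OF k(2,1)] k(3) by auto
  define x where "x = Arg (z j - z k)"
  have cx: "cis x = (z j - z k) / complex_of_real (cmod (z j - z k))"
    unfolding x_def using cis_Arg[OF ne] by (simp add: sgn_div_norm divide_inverse scaleR_conv_of_real mult.commute)
  have gk: "of_int (g k) * of_int (g k) = (1::real)" using gpm[OF k(1)] by auto
  define t where "t = (x - f k) / (2 * pi * of_int (g k))"
  have "f k + 2 * pi * of_int (g k) * t = x"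
  proof -
    have "2 * pi * of_int (g k) \<noteq> (0::real)" using gpm[OF k(1)] by auto
    then show ?thesis unfolding t_def by (simp add: field_simps)
  qed
  then show ?thesis unfolding at_link_iff using cx by metis
qed

lemma linkpt_inj: assumes "(k,j)\<in>E" "(k,j')\<in>E" "linkpt z k j = linkpt z k j'" shows "j = j'"
proof (rule ccontr)
  assume ne: "j \<noteq> j'"
  have e1: "k<n" "j<n" "k\<noteq>j" "cmod (z k - z j) \<le> 2+eps" using edge[OF assms(1)] by auto
  have e2: "j'<n" "k\<noteq>j'" "cmod (z k - z j') \<le> 2+eps" using edge[OF assms(2)] by auto
  define w where "w = z j - z k"
  define w' where "w' = z j' - z k"
  define r where "r = cmod w"
  define r' where "r' = cmod w'"
  have r2: "2 < r" unfolding r_def w_def using dist2[OF e1(2,1)] e1(3) by auto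
  have r2': "2 < r'" unfolding r'_def w'_def using dist2[OF e2(1) e1(1)] e2(2) by auto
  have rl: "r \<le> 2 + eps" unfolding r_def w_def using e1(4) by (simp add: norm_minus_commute)
  have rl': "r' \<le> 2 + eps" unfolding r'_def w'_def using e2(3) by (simp add: norm_minus_commute)
  have "w / complex_of_real r = w' / complex_of_real r'"
    using assms(3) unfolding linkpt_def w_def w'_def r_def r'_def by simp
  then have ww: "w' = complex_of_real (r'/r) * w" using r2 r2' by (simp add: field_simps)
  have "z j - z j' = w - w'" unfolding w_def w'_def by simp
  also have "\<dots> = complex_of_real (1 - r'/r) * w" using ww by (simp add: algebra_simps)
  finally have "cmod (z j - z j') = cmod (complex_of_real (1 - r'/r) * w)" by simp
  also have "\<dots> = \<bar>1 - r'/r\<bar> * r" by (simp only: norm_mult norm_of_real r_def)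
  also have "\<dots> = \<bar>r - r'\<bar>" using r2 by (simp add: abs_mult_pos[symmetric] field_simps)
  finally have "cmod (z j - z j') = \<bar>r - r'\<bar>" .
  moreover have "2 < cmod (z j - z j')" using dist2[OF e1(2) e2(1) ne] .
  ultimately show False using r2 r2' rl rl' epsl by linarith
qed

lemma crossing_mid: assumes "(a,b)\<in>E" shows "crossing z a b = (z a + z b) / 2"
proof -
  define c where "c = complex_of_real (cmod (z b - z a))"
  have "cmod (z a - z b) = cmod (z b - z a)" by (simp add: norm_minus_commute)
  then have "linkpt z a b + linkpt z b a = z a + z b + ((z b - z a)/c + (z a - z b)/c)"
    unfolding linkpt_def c_def by simp
  also have "(z b - z a)/c + (z a - z b)/c = 0" by (simp add: diff_divide_distrib)
  finally show ?thesis unfolding crossing_def by simp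
qed

lemma four_far: assumes "2 < cmod (A - A')" "2 < cmod (A - B')" "cmod (A - B) \<le> 5/2" "cmod (A' - B') \<le> 5/2"
  "A + B = A' + B'" shows False
proof -
  have h1: "4 < (Re A - Re A')^2 + (Im A - Im A')^2"
  proof -
    have "2^2 < (cmod (A - A'))^2" using assms(1) by (intro power_strict_mono) auto
    then show ?thesis by (simp add: cmod_power2)
  qed
  have h2: "4 < (Re A - Re B')^2 + (Im A - Im B')^2"
  proof -
    have "2^2 < (cmod (A - B'))^2" using assms(2) by (intro power_strict_mono) auto
    then show ?thesis by (simp add: cmod_power2)
  qed
  have h3: "(Re A - Re B)^2 + (Im A - Im B)^2 \<le> 25/4"
  proof -
    have "(cmod (A - B))^2 \<le> (5/2)^2" using assms(3) by (intro power_mono) auto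
    then show ?thesis by (simp add: cmod_power2 power_divide)
  qed
  have h4: "(Re A' - Re B')^2 + (Im A' - Im B')^2 \<le> 25/4"
  proof -
    have "(cmod (A' - B'))^2 \<le> (5/2)^2" using assms(4) by (intro power_mono) auto
    then show ?thesis by (simp add: cmod_power2 power_divide)
  qed
  have "Re (A + B) = Re (A' + B')" "Im (A + B) = Im (A' + B')" using assms(5) by simp_all
  then have r: "Re B = Re A' + Re B' - Re A" and i: "Im B = Im A' + Im B' - Im A" by simp_all
  have idr: "(Re A - Re A')^2 + (Re A - Re B')^2 = ((Re A - Re B)^2 + (Re A' - Re B')^2)/2"
    unfolding r by (simp add: power2_eq_square algebra_simps)
  have idi: "(Im A - Im A')^2 + (Im A - Im B')^2 = ((Im A - Im B)^2 + (Im A' - Im B')^2)/2"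
    unfolding i by (simp add: power2_eq_square algebra_simps)
  have "8 < (Re A - Re A')^2 + (Re A - Re B')^2 + ((Im A - Im A')^2 + (Im A - Im B')^2)"
    using h1 h2 by linarith
  also have "\<dots> = (((Re A - Re B)^2 + (Im A - Im B)^2) + ((Re A' - Re B')^2 + (Im A' - Im B')^2))/2"
    unfolding idr idi by (simp add: field_simps)
  also have "\<dots> \<le> 25/4" using h3 h4 by simp
  finally show False by simp
qed

lemma crossing_same: assumes "(a,b)\<in>E" "(a',b')\<in>E" "crossing z a b = crossing z a' b'"
  shows "(a' = a \<and> b' = b) \<or> (a' = b \<and> b' = a)"
proof -
  have "(z a + z b)/2 = (z a' + z b')/2" using assms crossing_mid by metis
  then have s: "z a + z b = z a' + z b'" by (metis divide_cancel_right zero_neq_numeral)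
  have e1: "a<n" "b<n" "a\<noteq>b" "cmod (z a - z b) \<le> 2+eps" using edge[OF assms(1)] by auto
  have e2: "a'<n" "b'<n" "a'\<noteq>b'" "cmod (z a' - z b') \<le> 2+eps" using edge[OF assms(2)] by auto
  have zi: "x<n \<Longrightarrow> y<n \<Longrightarrow> z x = z y \<Longrightarrow> x = y" for x y using dist2 by fastforce
  show ?thesis
  proof (cases "a' = a \<or> a' = b \<or> b' = a \<or> b' = b")
    case True
    then show ?thesis
    proof (elim disjE)
      assume "a' = a" then have "z b' = z b" using s by simp
      then show ?thesis using zi e1 e2 \<open>a' = a\<close> by metis
    next
      assume "a' = b" then have "z b' = z a" using s by (simp add: add.commute)
      then show ?thesis using zi e1 e2 \<open>a' = b\<close> by metis
    next
      assume "b' = a" then have "z a' = z b" using s by (simp add: add.commute)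
      then show ?thesis using zi e1 e2 \<open>b' = a\<close> by metis
    next
      assume "b' = b" then have "z a' = z a" using s by simp
      then show ?thesis using zi e1 e2 \<open>b' = b\<close> by metis
    qed
  next
    case False
    have "2 < cmod (z a - z a')" using dist2 e1 e2 False by metis
    moreover have "2 < cmod (z a - z b')" using dist2 e1 e2 False by metis
    ultimately have False using four_far[OF _ _ _ _ s] e1(4) e2(4) epsl by fastforce
    then show ?thesis ..
  qed
qed

end

context scs
begin

definition LT :: "nat \<Rightarrow> real set" where
  "LT k = {t. \<exists>j. (k,j)\<in>E \<and> at_link z f g k j t}"

abbreviation "nt \<equiv> next_time z E f g"
abbreviation "nc \<equiv> next_circ z E f g"
abbreviation "tr \<equiv> traj z E f g"

lemma LT_shift: "t + of_int q \<in> LT k \<longleftrightarrow> t \<in> LT k"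
  unfolding LT_def using at_link_shift by simp

lemma nt_char: assumes "t < x" "x \<in> LT k" "\<And>t'. t < t' \<Longrightarrow> t' \<in> LT k \<Longrightarrow> x \<le> t'"
  shows "nt k t = x"
  unfolding next_time_def
  by (rule Least_equality) (use assms in \<open>auto simp: LT_def\<close>)

lemma nt_ex: assumes "k<n"
  shows "\<exists>x. t < x \<and> x \<in> LT k \<and> (\<forall>t'. t < t' \<longrightarrow> t' \<in> LT k \<longrightarrow> x \<le> t')"
proof -
  define N where "N = {j. (k,j)\<in>E}"
  have "N \<subseteq> {..<n}" unfolding N_def using edge by auto
  then have finN: "finite N" by (rule finite_subset) simp
  have neN: "N \<noteq> {}" unfolding N_def using has_nb[OF assms] by auto
  define th where "th j = (SOME t. at_link z f g k j t)" for j
  have th: "at_link z f g k j (th j)" if "j\<in>N" for j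
    unfolding th_def by (rule someI_ex, rule at_link_ex) (use that N_def in simp)
  define mj where "mj j = th j + of_int (\<lfloor>t - th j\<rfloor> + 1)" for j
  have mj1: "t < mj j" for j unfolding mj_def by linarith
  have mj2: "at_link z f g k j (mj j)" if "j\<in>N" for j unfolding mj_def using th[OF that] by (simp only: at_link_shift)
  have mj3: "mj j \<le> t'" if hj: "j\<in>N" "t < t'" "at_link z f g k j t'" for j t'
  proof -
    obtain q where q: "t' = th j + of_int q" using at_link_diff[OF assms th[OF hj(1)] hj(3)] by blast
    then have "t - th j < of_int q" using hj(2) by simp
    then have "\<lfloor>t - th j\<rfloor> < q" by (simp add: floor_less_iff)
    then have "\<lfloor>t - th j\<rfloor> + 1 \<le> q" by simp
    then show ?thesis unfolding mj_def q by simp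
  qed
  define x where "x = Min (mj ` N)"
  have xin: "x \<in> mj ` N" unfolding x_def using finN neN by simp
  then obtain j0 where j0: "j0 \<in> N" "x = mj j0" by blast
  show ?thesis
  proof (intro exI conjI allI impI)
    show "t < x" using mj1 j0 by simp
    show "x \<in> LT k" unfolding LT_def using j0 mj2 N_def by auto
    fix t' assume "t < t'" "t' \<in> LT k"
    then obtain j where j: "(k,j)\<in>E" "at_link z f g k j t'" unfolding LT_def by auto
    then have "mj j \<le> t'" using mj3 \<open>t<t'\<close> N_def by auto
    moreover have "x \<le> mj j" unfolding x_def using finN j(1) N_def by auto
    ultimately show "x \<le> t'" by simp
  qed
qed

lemma nt_prop: assumes "k<n"
  shows "t < nt k t" "nt k t \<in> LT k" "\<And>t'. t < t' \<Longrightarrow> t' \<in> LT k \<Longrightarrow> nt k t \<le> t'"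
proof -
  obtain x where x: "t < x" "x \<in> LT k" "\<And>t'. t < t' \<Longrightarrow> t' \<in> LT k \<Longrightarrow> x \<le> t'"
    using nt_ex[OF assms, of t] by blast
  have "nt k t = x" using nt_char x by blast
  then show "t < nt k t" "nt k t \<in> LT k" "\<And>t'. t < t' \<Longrightarrow> t' \<in> LT k \<Longrightarrow> nt k t \<le> t'" using x by auto
qed

lemma nc_ex1: assumes "k<n" shows "\<exists>!j. (k,j)\<in>E \<and> at_link z f g k j (nt k t)"
proof -
  obtain j where j: "(k,j)\<in>E" "at_link z f g k j (nt k t)" using nt_prop(2)[OF assms, of t] unfolding LT_def by auto
  show ?thesis
  proof (rule ex1I[of _ j])
    show "(k,j)\<in>E \<and> at_link z f g k j (nt k t)" using j by simp
    fix j' assume "(k,j')\<in>E \<and> at_link z f g k j' (nt k t)"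
    then have "linkpt z k j' = linkpt z k j" using j unfolding at_link_def by simp
    then show "j' = j" using linkpt_inj j \<open>(k,j')\<in>E \<and> _\<close> by blast
  qed
qed

lemma nc_prop: assumes "k<n" shows "(k, nc k t)\<in>E" "at_link z f g k (nc k t) (nt k t)"
  using theI'[OF nc_ex1[OF assms, of t]] unfolding next_circ_def by auto

lemma nc_char: assumes "(k,j)\<in>E" "at_link z f g k j (nt k t)" shows "nc k t = j"
proof -
  have "k<n" using edge assms by auto
  show ?thesis unfolding next_circ_def using the1_equality[OF nc_ex1[OF \<open>k<n\<close>, of t]] assms by blast
qed

lemma nt_shift: assumes "k<n" shows "nt k (t + of_int q) = nt k t + of_int q"
proof (rule nt_char)
  show "t + of_int q < nt k t + of_int q" using nt_prop(1)[OF assms] by simp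
  show "nt k t + of_int q \<in> LT k" using nt_prop(2)[OF assms] LT_shift by simp
  fix t' assume a: "t + of_int q < t'" "t' \<in> LT k"
  have "t' - of_int q \<in> LT k" using a(2) LT_shift[of "t' - of_int q" q k] by simp
  then have "nt k t \<le> t' - of_int q" using nt_prop(3)[OF assms] a(1) by simp
  then show "nt k t + of_int q \<le> t'" by simp
qed

lemma nc_shift: assumes "k<n" shows "nc k (t + of_int q) = nc k t"
proof -
  have "at_link z f g k (nc k (t + of_int q)) (nt k t + of_int q)"
    using nc_prop(2)[OF assms, of "t + of_int q"] nt_shift[OF assms] by simp
  then have "at_link z f g k (nc k (t + of_int q)) (nt k t)" using at_link_shift by simp
  then show ?thesis using nc_char nc_prop(1)[OF assms] by metis
qed

lemma nt_same: assumes "k<n" "t \<le> t'" "t' < nt k t" shows "nt k t' = nt k t"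
proof (rule nt_char)
  show "t' < nt k t" by fact
  show "nt k t \<in> LT k" using nt_prop(2)[OF assms(1)] .
  fix s assume "t' < s" "s \<in> LT k"
  then show "nt k t \<le> s" using nt_prop(3)[OF assms(1)] assms(2) by simp
qed

lemma nc_same: assumes "k<n" "t \<le> t'" "t' < nt k t" shows "nc k t' = nc k t"
  unfolding next_circ_def using nt_same[OF assms] by simp

lemma rs_eq: "ring_step z E f g (k,t) = (nc k t, nt k t)"
  unfolding ring_step_def by simp

lemma tr0: "tr i t0 0 = (i,t0)" unfolding traj_def by simp

lemma trSuc: "tr i t0 (Suc m) = ring_step z E f g (tr i t0 m)" unfolding traj_def by simp

lemma tr_lt: assumes "i<n" shows "fst (tr i t0 m) < n"
proof (induction m)
  case 0 then show ?case using assms tr0 by simp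
next
  case (Suc m)
  obtain k t where kt: "tr i t0 m = (k,t)" by (cases "tr i t0 m")
  have "(k, nc k t) \<in> E" using nc_prop(1) Suc kt by simp
  then show ?case using edge trSuc kt rs_eq by simp
qed

lemma tr_step: "tr i t0 (Suc m) = (nc (fst (tr i t0 m)) (snd (tr i t0 m)), nt (fst (tr i t0 m)) (snd (tr i t0 m)))"
  by (cases "tr i t0 m") (simp add: trSuc rs_eq)

lemma tr_mono1: assumes "i<n" shows "snd (tr i t0 m) < snd (tr i t0 (Suc m))"
proof -
  have "fst (tr i t0 m) < n" by (rule tr_lt[OF assms])
  then have "snd (tr i t0 m) < nt (fst (tr i t0 m)) (snd (tr i t0 m))" by (rule nt_prop(1))
  then show ?thesis unfolding tr_step[of i t0 m] by simp
qed

lemma tr_mono: assumes "i<n" "m < m'" shows "snd (tr i t0 m) < snd (tr i t0 m')"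
proof -
  have "strict_mono (\<lambda>m. snd (tr i t0 m))" unfolding strict_mono_Suc_iff using tr_mono1[OF assms(1)] by simp
  from strict_monoD[OF this assms(2)] show ?thesis by simp
qed

lemma tr_mono_le: assumes "i<n" "m \<le> m'" shows "snd (tr i t0 m) \<le> snd (tr i t0 m')"
proof (cases "m = m'")
  case False then have "m < m'" using assms(2) by simp
  from less_imp_le[OF tr_mono[OF assms(1) this]] show ?thesis .
qed simp

lemma tr_edge: assumes "i<n"
  shows "(fst (tr i t0 m), fst (tr i t0 (Suc m))) \<in> E"
    "at_link z f g (fst (tr i t0 m)) (fst (tr i t0 (Suc m))) (snd (tr i t0 (Suc m)))"
  using tr_step nc_prop tr_lt[OF assms] by simp_all

lemma tr_gap: assumes "i<n" "t' \<in> LT (fst (tr i t0 m))" "snd (tr i t0 m) < t'"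
  shows "snd (tr i t0 (Suc m)) \<le> t'"
  using tr_step nt_prop(3) tr_lt[OF assms(1)] assms by simp

lemma tr_LT: assumes "i<n" shows "snd (tr i t0 (Suc m)) \<in> LT (fst (tr i t0 (Suc m)))"
  using tr_edge[OF assms, of t0 m] sync symE unfolding LT_def by blast

lemma tr_from: "tr (fst (tr i t0 m)) (snd (tr i t0 m)) j = tr i t0 (m + j)"
  unfolding traj_def by (simp add: funpow_add add.commute[of m j])

lemma tr_shift: assumes "k<n" shows "tr k (t + of_int q) m = (fst (tr k t m), snd (tr k t m) + of_int q)"
proof (induction m)
  case 0 then show ?case using tr0 by simp
next
  case (Suc m)
  have l: "fst (tr k t m) < n" using tr_lt assms by blast
  show ?case unfolding tr_step[of k "t + of_int q"] tr_step[of k t] Suc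
    using nt_shift[OF l] nc_shift[OF l] by simp
qed

lemma tr_same: assumes "k<n" "t \<le> t'" "t' < nt k t" shows "tr k t' (Suc m) = tr k t (Suc m)"
  unfolding traj_def funpow_Suc_right comp_def rs_eq using nc_same[OF assms] nt_same[OF assms] by simp

end

context scs
begin

lemma pred_circ: assumes "i<n" "fst (tr i t0 (Suc a)) = fst (tr i t0 (Suc b))"
    "snd (tr i t0 (Suc b)) = snd (tr i t0 (Suc a)) + of_int q"
  shows "fst (tr i t0 a) = fst (tr i t0 b)"
proof -
  define B where "B = fst (tr i t0 (Suc a))"
  have ea: "(fst (tr i t0 a), B) \<in> E" "at_link z f g (fst (tr i t0 a)) B (snd (tr i t0 (Suc a)))"
    using tr_edge[OF assms(1), of t0 a] unfolding B_def by auto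
  have eb: "(fst (tr i t0 b), B) \<in> E" "at_link z f g (fst (tr i t0 b)) B (snd (tr i t0 (Suc a)) + of_int q)"
    using tr_edge[OF assms(1), of t0 b] assms(2,3) unfolding B_def by auto
  have 1: "at_link z f g B (fst (tr i t0 a)) (snd (tr i t0 (Suc a)))" using ea sync by blast
  have "at_link z f g B (fst (tr i t0 b)) (snd (tr i t0 (Suc a)) + of_int q)" using eb sync by blast
  then have 2: "at_link z f g B (fst (tr i t0 b)) (snd (tr i t0 (Suc a)))" using at_link_shift by simp
  have "linkpt z B (fst (tr i t0 a)) = linkpt z B (fst (tr i t0 b))" using 1 2 unfolding at_link_def by simp
  then show ?thesis using linkpt_inj symE ea(1) eb(1) by blast
qed

lemma pred_time: assumes "i<n" "fst (tr i t0 (Suc a)) = fst (tr i t0 (Suc b))"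
    "snd (tr i t0 (Suc (Suc b))) = snd (tr i t0 (Suc (Suc a))) + of_int q"
    "fst (tr i t0 (Suc (Suc a))) = fst (tr i t0 (Suc (Suc b)))"
  shows "snd (tr i t0 (Suc b)) = snd (tr i t0 (Suc a)) + of_int q"
proof -
  let ?K = "fst (tr i t0 (Suc a))"
  let ?T = "\<lambda>m. snd (tr i t0 m)"
  have la: "?T (Suc a) \<in> LT ?K" using tr_LT[OF assms(1)] by simp
  have lb: "?T (Suc b) \<in> LT ?K" using tr_LT[OF assms(1), of t0 b] assms(2) by simp
  have ma: "?T (Suc a) < ?T (Suc (Suc a))" using tr_mono1[OF assms(1)] by blast
  have mb: "?T (Suc b) < ?T (Suc (Suc b))" using tr_mono1[OF assms(1)] by blast
  show ?thesis
  proof (rule ccontr)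
    assume ne: "?T (Suc b) \<noteq> ?T (Suc a) + of_int q"
    show False
    proof (cases "?T (Suc b) - of_int q > ?T (Suc a)")
      case True
      have "?T (Suc b) - of_int q \<in> LT ?K" using lb LT_shift[of "?T (Suc b) - of_int q" q] by simp
      then have "?T (Suc (Suc a)) \<le> ?T (Suc b) - of_int q" using tr_gap[OF assms(1)] True by blast
      then show False using mb assms(3) by simp
    next
      case False
      then have lt: "?T (Suc b) < ?T (Suc a) + of_int q" using ne by simp
      have "?T (Suc a) + of_int q \<in> LT (fst (tr i t0 (Suc b)))" using la LT_shift assms(2) by simp
      then have "?T (Suc (Suc b)) \<le> ?T (Suc a) + of_int q" using tr_gap[OF assms(1)] lt by blast
      then show False using ma assms(3) by simp
    qed
  qed
qed

lemma retro: assumes "i<n"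
  shows "a < b \<Longrightarrow> fst (tr i t0 (Suc a)) = fst (tr i t0 (Suc b)) \<Longrightarrow>
    snd (tr i t0 (Suc b)) = snd (tr i t0 (Suc a)) + of_int q \<Longrightarrow> on_circ_at z E f g i t0 (t0 + of_int q) i"
proof (induction a arbitrary: b)
  case 0
  let ?T = "\<lambda>m. snd (tr i t0 m)"
  have c0: "fst (tr i t0 0) = fst (tr i t0 b)" using pred_circ[OF assms 0(2,3)] .
  then have cb: "fst (tr i t0 b) = i" using tr0 by simp
  obtain b' where b': "b = Suc b'" using 0(1) by (cases b) auto
  have T0: "?T 0 = t0" using tr0 by simp
  have le: "?T b \<le> t0 + of_int q"
  proof (rule ccontr)
    assume "\<not> ?T b \<le> t0 + of_int q"
    then have gt: "t0 < ?T b - of_int q" by simp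
    have "?T b \<in> LT i" using tr_LT[OF assms, of t0 b'] b' cb by simp
    then have "?T b - of_int q \<in> LT (fst (tr i t0 0))" using LT_shift[of "?T b - of_int q" q i] tr0 by simp
    then have "?T (Suc 0) \<le> ?T b - of_int q"
    proof (rule tr_gap[OF assms])
      show "snd (tr i t0 0) < ?T b - of_int q" using gt T0 by simp
    qed
    moreover have "?T b < ?T (Suc b)" using tr_mono1[OF assms] by blast
    ultimately show False using 0(3) by simp
  qed
  have "t0 < ?T (Suc 0)" using tr_mono1[OF assms, of t0 0] T0 by simp
  then have "t0 + of_int q < ?T (Suc b)" using 0(3) by simp
  then show ?case unfolding on_circ_at_def using cb le by blast
next
  case (Suc a)
  obtain b' where b': "b = Suc b'" using Suc(2) by (cases b) auto
  have c: "fst (tr i t0 (Suc a)) = fst (tr i t0 (Suc b'))" using pred_circ[OF assms Suc(3,4)] b' by simp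
  have t: "snd (tr i t0 (Suc b')) = snd (tr i t0 (Suc a)) + of_int q"
    using pred_time[OF assms c] Suc(3,4) b' by simp
  show ?case using Suc.IH[of b'] Suc(2) b' c t by simp
qed

lemma pigeon: assumes "i<n"
  shows "\<exists>a b q. a < b \<and> fst (tr i t0 (Suc a)) = fst (tr i t0 (Suc b)) \<and>
     snd (tr i t0 (Suc b)) = snd (tr i t0 (Suc a)) + of_int q"
proof -
  define h where "h m = (fst (tr i t0 m), fst (tr i t0 (Suc m)))" for m
  have sub: "h ` {..n*n} \<subseteq> {..<n} \<times> {..<n}" unfolding h_def using tr_lt[OF assms] by auto
  have "card (h ` {..n*n}) \<le> card ({..<n} \<times> {..<n})" by (rule card_mono[OF _ sub]) simp
  also have "\<dots> = n*n" by (simp add: card_cartesian_product)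
  also have "\<dots> < card {..n*n}" by simp
  finally have "\<not> inj_on h {..n*n}" using pigeonhole by blast
  then obtain x y where xy: "x \<noteq> y" "h x = h y" unfolding inj_on_def by blast
  have key: "\<exists>q. snd (tr i t0 (Suc y)) = snd (tr i t0 (Suc x)) + of_int q" if "h x = h y" for x y
  proof -
    have e1: "at_link z f g (fst (tr i t0 x)) (fst (tr i t0 (Suc x))) (snd (tr i t0 (Suc x)))"
      using tr_edge[OF assms] by blast
    have e2: "at_link z f g (fst (tr i t0 x)) (fst (tr i t0 (Suc x))) (snd (tr i t0 (Suc y)))"
      using tr_edge[OF assms, of t0 y] that unfolding h_def by simp
    show ?thesis using at_link_diff[OF tr_lt[OF assms] e1 e2] by blast
  qed
  show ?thesis
  proof (cases "x < y")
    case True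
    obtain q where "snd (tr i t0 (Suc y)) = snd (tr i t0 (Suc x)) + of_int q" using key[OF xy(2)] by blast
    moreover have "fst (tr i t0 (Suc x)) = fst (tr i t0 (Suc y))" using xy(2) unfolding h_def by simp
    ultimately show ?thesis using True by blast
  next
    case False then have yx: "y < x" using xy(1) by simp
    obtain q where "snd (tr i t0 (Suc x)) = snd (tr i t0 (Suc y)) + of_int q" using key[OF xy(2)[symmetric]] by blast
    moreover have "fst (tr i t0 (Suc y)) = fst (tr i t0 (Suc x))" using xy(2) unfolding h_def by simp
    ultimately show ?thesis using yx by blast
  qed
qed

lemma period_ex: assumes "i<n" shows "\<exists>l::nat. 0 < l \<and> on_circ_at z E f g i t0 (t0 + real l) i"
proof -
  obtain a b q where abq: "a < b" "fst (tr i t0 (Suc a)) = fst (tr i t0 (Suc b))"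
     "snd (tr i t0 (Suc b)) = snd (tr i t0 (Suc a)) + of_int q" using pigeon[OF assms] by blast
  have "snd (tr i t0 (Suc a)) < snd (tr i t0 (Suc b))" using tr_mono[OF assms] abq(1) by simp
  then have q: "0 < q" using abq(3) by simp
  have "on_circ_at z E f g i t0 (t0 + of_int q) i" using retro[OF assms abq] .
  moreover have "real (nat q) = of_int q" using q by simp
  ultimately show ?thesis using q by (intro exI[of _ "nat q"]) simp
qed

end

context scs
begin

lemma per_struct: assumes "i<n" "0<l" "on_circ_at z E f g i t0 (t0 + real l) i"
  shows "\<exists>P. 0<P \<and> fst (tr i t0 P) = i \<and> snd (tr i t0 P) \<le> t0 + real l \<and>
     (\<forall>j. tr i t0 (P + Suc j) = (fst (tr i t0 (Suc j)), snd (tr i t0 (Suc j)) + real l))"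
proof -
  obtain P where P: "fst (tr i t0 P) = i" "snd (tr i t0 P) \<le> t0 + real l" "t0 + real l < snd (tr i t0 (Suc P))"
    using assms(3) unfolding on_circ_at_def by blast
  have nt: "snd (tr i t0 (Suc P)) = nt i (snd (tr i t0 P))" using tr_step[of i t0 P] P(1) by simp
  have J: "tr i t0 (P + Suc j) = (fst (tr i t0 (Suc j)), snd (tr i t0 (Suc j)) + real l)" for j
  proof -
    have "tr i t0 (P + Suc j) = tr i (snd (tr i t0 P)) (Suc j)" using tr_from[of i t0 P "Suc j"] P(1) by simp
    also have "\<dots> = tr i (t0 + real l) (Suc j)"
      using tr_same[OF assms(1) P(2)] P(3) nt by simp
    also have "\<dots> = tr i (t0 + of_int (int l)) (Suc j)" by simp
    also have "\<dots> = (fst (tr i t0 (Suc j)), snd (tr i t0 (Suc j)) + of_int (int l))"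
      by (rule tr_shift[OF assms(1)])
    finally show ?thesis by simp
  qed
  have "P \<noteq> 0"
  proof
    assume "P = 0"
    have "snd (tr i t0 (P + Suc 0)) = snd (tr i t0 (Suc 0)) + real l" using J[of 0] by simp
    then have "snd (tr i t0 (Suc 0)) = snd (tr i t0 (Suc 0)) + real l" using \<open>P = 0\<close> by simp
    then show False using assms(2) by simp
  qed
  then show ?thesis using P(1,2) J by blast
qed

lemma per_fst: assumes "fst (tr i t0 P) = i"
    "\<forall>j. tr i t0 (P + Suc j) = (fst (tr i t0 (Suc j)), snd (tr i t0 (Suc j)) + real l)"
  shows "fst (tr i t0 (P + m)) = fst (tr i t0 m)"
proof (cases m)
  case 0 then show ?thesis using assms(1) tr0 by simp
next
  case (Suc j) then show ?thesis using assms(2) by simp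
qed

lemma oca_shift: assumes "i<n" "0<l" "on_circ_at z E f g i t0 (t0 + real l) i"
    "on_circ_at z E f g i t0 tau k"
  shows "on_circ_at z E f g i t0 (tau + real l) k"
proof -
  obtain P where P: "0<P" "fst (tr i t0 P) = i" "snd (tr i t0 P) \<le> t0 + real l"
     "\<forall>j. tr i t0 (P + Suc j) = (fst (tr i t0 (Suc j)), snd (tr i t0 (Suc j)) + real l)"
    using per_struct[OF assms(1-3)] by blast
  obtain m where m: "fst (tr i t0 m) = k" "snd (tr i t0 m) \<le> tau" "tau < snd (tr i t0 (Suc m))"
    using assms(4) unfolding on_circ_at_def by blast
  show ?thesis
  proof (cases m)
    case 0
    have k: "k = i" using m(1) 0 tr0 by simp
    have t: "t0 \<le> tau" using m(2) 0 tr0 by simp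
    have "tr i t0 (Suc P) = (fst (tr i t0 (Suc 0)), snd (tr i t0 (Suc 0)) + real l)" using P(4)[rule_format, of 0] by simp
    then have "tau + real l < snd (tr i t0 (Suc P))" using m(3) 0 by simp
    moreover have "snd (tr i t0 P) \<le> tau + real l" using P(3) t by simp
    ultimately show ?thesis unfolding on_circ_at_def using P(2) k by blast
  next
    case (Suc j)
    have "tr i t0 (P + m) = (k, snd (tr i t0 m) + real l)" using P(4) Suc m(1) by simp
    moreover have "tr i t0 (Suc (P + m)) = (fst (tr i t0 (Suc m)), snd (tr i t0 (Suc m)) + real l)"
      using P(4)[rule_format, of "Suc j"] Suc by simp
    ultimately show ?thesis unfolding on_circ_at_def using m
      by (intro exI[of _ "P + m"]) simp
  qed
qed

lemma oca_shiftK: assumes "i<n" "0<l" "on_circ_at z E f g i t0 (t0 + real l) i"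
    "on_circ_at z E f g i t0 tau k"
  shows "on_circ_at z E f g i t0 (tau + real l * real K) k"
proof (induction K)
  case 0 then show ?case using assms(4) by simp
next
  case (Suc K)
  have "on_circ_at z E f g i t0 ((tau + real l * real K) + real l) k" using oca_shift[OF assms(1-3) Suc] .
  then show ?case by (simp add: algebra_simps)
qed

end

context scs
begin

lemma sync_orbit: assumes "i<n" "fst (tr i t0 mx) = fst (tr i' t0' my)"
    "snd (tr i' t0' my) = snd (tr i t0 mx) + of_int q"
  shows "tr i' t0' (my + j) = (fst (tr i t0 (mx + j)), snd (tr i t0 (mx + j)) + of_int q)"
proof -
  let ?k = "fst (tr i t0 mx)" and ?s = "snd (tr i t0 mx)"
  have kn: "?k < n" using tr_lt[OF assms(1)] by blast
  have "tr i' t0' (my + j) = tr (fst (tr i' t0' my)) (snd (tr i' t0' my)) j" using tr_from by simp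
  also have "\<dots> = tr ?k (?s + of_int q) j" using assms(2,3) by simp
  also have "\<dots> = (fst (tr ?k ?s j), snd (tr ?k ?s j) + of_int q)" by (rule tr_shift[OF kn])
  also have "tr ?k ?s j = tr i t0 (mx + j)" by (rule tr_from)
  finally show ?thesis .
qed

lemma ring_sub: assumes "i<n" "i'<n" "0<l" "on_circ_at z E f g i t0 (t0 + real l) i"
    "fst (tr i t0 mx) = fst (tr i' t0' my)"
    "snd (tr i' t0' my) = snd (tr i t0 mx) + of_int q"
  shows "ring z E f g i t0 \<subseteq> ring z E f g i' t0'"
proof
  fix x assume "x \<in> ring z E f g i t0"
  then obtain k tau where x: "x = (k, frac tau)" "t0 \<le> tau" "on_circ_at z E f g i t0 tau k"
    unfolding ring_def by blast
  have "real l > 0" using assms(3) by simp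
  then obtain K :: nat where K: "snd (tr i t0 mx) - tau < real K * real l"
    using reals_Archimedean3 by blast
  define sg where "sg = tau + real l * real K"
  have sgge: "snd (tr i t0 mx) \<le> sg" unfolding sg_def using K by (simp add: algebra_simps)
  have "on_circ_at z E f g i t0 sg k" unfolding sg_def using oca_shiftK[OF assms(1,3,4) x(3)] .
  then obtain m0 where m0: "fst (tr i t0 m0) = k" "snd (tr i t0 m0) \<le> sg" "sg < snd (tr i t0 (Suc m0))"
    unfolding on_circ_at_def by blast
  have "mx \<le> m0"
  proof (rule ccontr)
    assume "\<not> mx \<le> m0"
    then have "Suc m0 \<le> mx" by simp
    then have "snd (tr i t0 (Suc m0)) \<le> snd (tr i t0 mx)" using tr_mono_le[OF assms(1)] by blast
    then show False using m0(3) sgge by simp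
  qed
  then obtain j where j: "m0 = mx + j" using le_Suc_ex by blast
  have y1: "tr i' t0' (my + j) = (k, snd (tr i t0 m0) + of_int q)"
    using sync_orbit[OF assms(1,5,6), of j] j m0(1) by simp
  have y2: "tr i' t0' (my + Suc j) = (fst (tr i t0 (Suc m0)), snd (tr i t0 (Suc m0)) + of_int q)"
    using sync_orbit[OF assms(1,5,6), of "Suc j"] j by simp
  have oc: "on_circ_at z E f g i' t0' (sg + of_int q) k"
    unfolding on_circ_at_def
    by (rule exI[of _ "my + j"]) (use y1 y2 m0 in simp)
  have "t0' \<le> snd (tr i' t0' my)" using tr_mono_le[OF assms(2), of 0 my t0'] tr0 by simp
  then have ge: "t0' \<le> sg + of_int q" using assms(6) sgge by simp
  have "frac (sg + of_int q) = frac tau"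
  proof -
    have "sg + of_int q = tau + of_int (int (l * K) + q)" unfolding sg_def by simp
    then show ?thesis by (simp only: frac_add_of_int_right)
  qed
  then have "x = (k, frac (sg + of_int q))" using x(1) by simp
  then show "x \<in> ring z E f g i' t0'" unfolding ring_def using oc ge by blast
qed

end

context scs
begin

definition CP :: "nat \<Rightarrow> real \<Rightarrow> complex \<Rightarrow> nat \<Rightarrow> bool" where
  "CP i t0 c m \<longleftrightarrow> crossing z (fst (tr i t0 m)) (fst (tr i t0 (Suc m))) = c"

lemma cp_period: assumes "i<n" "0<l" "on_circ_at z E f g i t0 (t0 + real l) i"
  shows "\<exists>P. 0 < P \<and> snd (tr i t0 (Suc P)) \<le> snd (tr i t0 (Suc 0)) + real l \<and>
    (\<forall>m. CP i t0 c (P + m) \<longleftrightarrow> CP i t0 c m) \<and>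
    (\<forall>m. snd (tr i t0 (Suc (P + m))) = snd (tr i t0 (Suc m)) + real l)"
proof -
  obtain P where P: "0<P" "fst (tr i t0 P) = i" "snd (tr i t0 P) \<le> t0 + real l"
     "\<forall>j. tr i t0 (P + Suc j) = (fst (tr i t0 (Suc j)), snd (tr i t0 (Suc j)) + real l)"
    using per_struct[OF assms] by blast
  have f: "fst (tr i t0 (P + m)) = fst (tr i t0 m)" for m using per_fst[OF P(2,4)] .
  have cp: "CP i t0 c (P + m) \<longleftrightarrow> CP i t0 c m" for m
    unfolding CP_def using f[of m] f[of "Suc m"] by simp
  have s: "snd (tr i t0 (Suc (P + m))) = snd (tr i t0 (Suc m)) + real l" for m
    using P(4)[rule_format, of m] by simp
  show ?thesis using P(1) cp s[of 0] s by auto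
qed

lemma same_state_ring: assumes "i<n" "i'<n" "0<l" "on_circ_at z E f g i t0 (t0 + real l) i"
    "0<l'" "on_circ_at z E f g i' t0' (t0' + real l') i'"
    "fst (tr i t0 mx) = fst (tr i' t0' my)"
    "snd (tr i' t0' my) = snd (tr i t0 mx) + of_int q"
  shows "ring z E f g i t0 = ring z E f g i' t0'"
proof
  show "ring z E f g i t0 \<subseteq> ring z E f g i' t0'" using ring_sub[OF assms(1-4,7,8)] .
  have "snd (tr i t0 mx) = snd (tr i' t0' my) + of_int (-q)" using assms(8) by simp
  then show "ring z E f g i' t0' \<subseteq> ring z E f g i t0" using ring_sub[OF assms(2,1,5,6) assms(7)[symmetric]] by blast
qed

lemma cross_pair: assumes "i<n" "i'<n" "CP i t0 c m" "CP i' t0' c m'"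
  shows "(fst (tr i' t0' m') = fst (tr i t0 m) \<and> fst (tr i' t0' (Suc m')) = fst (tr i t0 (Suc m))) \<or>
         (fst (tr i' t0' m') = fst (tr i t0 (Suc m)) \<and> fst (tr i' t0' (Suc m')) = fst (tr i t0 m))"
    "\<exists>q. snd (tr i' t0' (Suc m')) = snd (tr i t0 (Suc m)) + of_int q"
proof -
  have e1: "(fst (tr i t0 m), fst (tr i t0 (Suc m))) \<in> E" using tr_edge[OF assms(1)] by blast
  have e2: "(fst (tr i' t0' m'), fst (tr i' t0' (Suc m'))) \<in> E" using tr_edge[OF assms(2)] by blast
  show P: "(fst (tr i' t0' m') = fst (tr i t0 m) \<and> fst (tr i' t0' (Suc m')) = fst (tr i t0 (Suc m))) \<or>
         (fst (tr i' t0' m') = fst (tr i t0 (Suc m)) \<and> fst (tr i' t0' (Suc m')) = fst (tr i t0 m))"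
    using crossing_same[OF e1 e2] assms(3,4) unfolding CP_def by simp
  have a1: "at_link z f g (fst (tr i t0 m)) (fst (tr i t0 (Suc m))) (snd (tr i t0 (Suc m)))"
    using tr_edge[OF assms(1)] by blast
  have a2: "at_link z f g (fst (tr i' t0' m')) (fst (tr i' t0' (Suc m'))) (snd (tr i' t0' (Suc m')))"
    using tr_edge[OF assms(2)] by blast
  have a3: "at_link z f g (fst (tr i t0 m)) (fst (tr i t0 (Suc m))) (snd (tr i' t0' (Suc m')))"
    using P
  proof
    assume "fst (tr i' t0' m') = fst (tr i t0 m) \<and> fst (tr i' t0' (Suc m')) = fst (tr i t0 (Suc m))"
    then show ?thesis using a2 by simp
  next
    assume h: "fst (tr i' t0' m') = fst (tr i t0 (Suc m)) \<and> fst (tr i' t0' (Suc m')) = fst (tr i t0 m)"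
    then have "at_link z f g (fst (tr i t0 (Suc m))) (fst (tr i t0 m)) (snd (tr i' t0' (Suc m')))" using a2 by simp
    then show ?thesis using sync e1 by blast
  qed
  show "\<exists>q. snd (tr i' t0' (Suc m')) = snd (tr i t0 (Suc m)) + of_int q"
    using at_link_diff[OF tr_lt[OF assms(1)] a1 a3] .
qed

lemma cross_struct: assumes "i<n" "i'<n" "ring z E f g i t0 \<noteq> ring z E f g i' t0'"
    "0<l" "on_circ_at z E f g i t0 (t0 + real l) i"
    "\<And>l2. 0<l2 \<Longrightarrow> on_circ_at z E f g i t0 (t0 + real l2) i \<Longrightarrow> l \<le> l2"
    "0<l'" "on_circ_at z E f g i' t0' (t0' + real l') i'"
    "CP i t0 c M" "\<And>m. CP i t0 c m \<Longrightarrow> M \<le> m" "CP i' t0' c M'"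
  shows "CP i t0 c m \<Longrightarrow> \<exists>k::nat. snd (tr i t0 (Suc m)) = snd (tr i t0 (Suc M)) + real l * real k"
proof (induction m rule: less_induct)
  case (less m)
  obtain P where P: "0 < P" "snd (tr i t0 (Suc P)) \<le> snd (tr i t0 (Suc 0)) + real l"
    "\<And>m. CP i t0 c (P + m) \<longleftrightarrow> CP i t0 c m"
    "\<And>m. snd (tr i t0 (Suc (P + m))) = snd (tr i t0 (Suc m)) + real l"
    using cp_period[OF assms(1,4,5), of c] by blast
  let ?T = "\<lambda>m. snd (tr i t0 m)"
  show ?case
  proof (cases "P \<le> m")
    case True
    then obtain m0 where m0: "m = P + m0" using le_Suc_ex by blast
    have "CP i t0 c m0" using less.prems m0 P(3) by simp
    moreover have "m0 < m" using m0 P(1) by simp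
    ultimately obtain k where k: "?T (Suc m0) = ?T (Suc M) + real l * real k" using less.IH by blast
    have "?T (Suc m) = ?T (Suc M) + real l * real (Suc k)" using P(4)[of m0] m0 k by (simp add: algebra_simps)
    then show ?thesis by blast
  next
    case False
    have "m = M"
    proof (rule ccontr)
      assume "m \<noteq> M"
      then have Mm: "M < m" using assms(10)[OF less.prems] by simp
      obtain q where q: "?T (Suc m) = ?T (Suc M) + of_int q" using cross_pair(2)[OF assms(1,1,9) less.prems] by blast
      have "?T (Suc M) < ?T (Suc m)" using tr_mono[OF assms(1)] Mm by simp
      then have q0: "0 < q" using q by simp
      have "?T (Suc m) \<le> ?T P" using tr_mono_le[OF assms(1)] False by simp
      also have "\<dots> < ?T (Suc P)" using tr_mono1[OF assms(1)] by blast
      also have "\<dots> \<le> ?T (Suc 0) + real l" using P(2) .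
      also have "\<dots> \<le> ?T (Suc M) + real l" using tr_mono_le[OF assms(1)] by simp
      finally have ql: "of_int q < real l" using q by simp
      from cross_pair(1)[OF assms(1,1,9) less.prems]
      show False
      proof
        assume h: "fst (tr i t0 m) = fst (tr i t0 M) \<and> fst (tr i t0 (Suc m)) = fst (tr i t0 (Suc M))"
        have "on_circ_at z E f g i t0 (t0 + of_int q) i" using retro[OF assms(1) Mm] h q by simp
        moreover have "real (nat q) = of_int q" using q0 by simp
        ultimately have "l \<le> nat q" using assms(6)[of "nat q"] q0 by simp
        then show False using ql q0 by linarith
      next
        assume h: "fst (tr i t0 m) = fst (tr i t0 (Suc M)) \<and> fst (tr i t0 (Suc m)) = fst (tr i t0 M)"
        obtain q' where q': "snd (tr i' t0' (Suc M')) = ?T (Suc M) + of_int q'"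
          using cross_pair(2)[OF assms(1,2,9,11)] by blast
        from cross_pair(1)[OF assms(1,2,9,11)]
        show False
        proof
          assume h2: "fst (tr i' t0' M') = fst (tr i t0 M) \<and> fst (tr i' t0' (Suc M')) = fst (tr i t0 (Suc M))"
          have "ring z E f g i t0 = ring z E f g i' t0'"
            using same_state_ring[OF assms(1,2,4,5,7,8), of "Suc M" "Suc M'" q'] h2 q' by simp
          then show False using assms(3) by simp
        next
          assume h2: "fst (tr i' t0' M') = fst (tr i t0 (Suc M)) \<and> fst (tr i' t0' (Suc M')) = fst (tr i t0 M)"
          have e: "snd (tr i' t0' (Suc M')) = ?T (Suc m) + of_int (q' - q)" using q q' by simp
          have "ring z E f g i t0 = ring z E f g i' t0'"
            using same_state_ring[OF assms(1,2,4,5,7,8), of "Suc m" "Suc M'" "q' - q"] h h2 e by simp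
          then show False using assms(3) by simp
        qed
      qed
    qed
    then show ?thesis by (intro exI[of _ 0]) simp
  qed
qed

lemma cross_gen: assumes "i<n" "0<l" "on_circ_at z E f g i t0 (t0 + real l) i" "CP i t0 c M"
  shows "\<exists>m. CP i t0 c m \<and> snd (tr i t0 (Suc m)) = snd (tr i t0 (Suc M)) + real l * real k"
proof (induction k)
  case 0 then show ?case using assms(4) by auto
next
  case (Suc k)
  obtain P where P: "0 < P"
    "\<And>m. CP i t0 c (P + m) \<longleftrightarrow> CP i t0 c m"
    "\<And>m. snd (tr i t0 (Suc (P + m))) = snd (tr i t0 (Suc m)) + real l"
    using cp_period[OF assms(1-3), of c] by blast
  obtain m where m: "CP i t0 c m" "snd (tr i t0 (Suc m)) = snd (tr i t0 (Suc M)) + real l * real k" using Suc by blast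
  show ?case using m P(2)[of m] P(3)[of m] by (intro exI[of _ "P + m"]) (simp add: algebra_simps)
qed

end

lemma nt_gcd: fixes l l' :: nat and s :: int assumes "0 < l" "0 < l'"
  shows "(\<exists>k k'::nat. s + int l * int k = int l' * int k') \<longleftrightarrow> int (gcd l l') dvd s"
proof
  assume "\<exists>k k'::nat. s + int l * int k = int l' * int k'"
  then obtain k k' :: nat where kk: "s = int l' * int k' - int l * int k" by (metis add_diff_cancel_right')
  have "int (gcd l l') dvd int l" "int (gcd l l') dvd int l'" by simp_all
  then show "int (gcd l l') dvd s" unfolding kk by (simp add: dvd_diff)
next
  assume "int (gcd l l') dvd s"
  then obtain w where w: "s = int (gcd l l') * w" by blast
  obtain u v where uv: "u * int l + v * int l' = gcd (int l) (int l')" using bezout_int by blast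
  have "gcd (int l) (int l') = int (gcd l l')" by (simp add: gcd_int_def)
  then have "s = (u * int l + v * int l') * w" using uv w by simp
  then have s: "s = (u*w) * int l + (v*w) * int l'" by (simp add: algebra_simps)
  define T where "T = \<bar>u*w\<bar> + \<bar>v*w\<bar>"
  define k where "k = int l' * T - u*w"
  define k' where "k' = v*w + int l * T"
  have T0: "0 \<le> T" unfolding T_def by simp
  have "T \<le> int l' * T" using assms(2) T0 by (simp add: mult_le_cancel_right1)
  then have k0: "0 \<le> k" unfolding k_def T_def by linarith
  have "T \<le> int l * T" using assms(1) T0 by (simp add: mult_le_cancel_right1)
  then have k0': "0 \<le> k'" unfolding k'_def T_def by linarith
  have "s + int l * k = int l' * k'" unfolding s k_def k'_def by (simp add: algebra_simps)
  then have "s + int l * int (nat k) = int l' * int (nat k')" using k0 k0' by simp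
  then show "\<exists>k k'::nat. s + int l * int k = int l' * int k'" by blast
qed

context scs
begin

lemma orbit_data: assumes "i<n" "ring_len z E f g i t0 = 2 * pi * real l"
  shows "0 < l" "on_circ_at z E f g i t0 (t0 + real l) i"
    "\<And>l2. 0<l2 \<Longrightarrow> on_circ_at z E f g i t0 (t0 + real l2) i \<Longrightarrow> l \<le> l2"
proof -
  let ?P = "\<lambda>l::nat. 0 < l \<and> on_circ_at z E f g i t0 (t0 + real l) i"
  have ex: "\<exists>l. ?P l" using period_ex[OF assms(1)] by blast
  have "2 * pi * real (Least ?P) = 2 * pi * real l" using assms(2) unfolding ring_len_def by simp
  then have L: "Least ?P = l" by simp
  show "0 < l" "on_circ_at z E f g i t0 (t0 + real l) i" using LeastI_ex[OF ex] L by auto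
  fix l2 assume "0<l2" "on_circ_at z E f g i t0 (t0 + real l2) i"
  then show "l \<le> l2" using Least_le[of ?P l2] L by blast
qed

lemma pl_iff: "L \<in> path_lens z E f g i t0 c \<longleftrightarrow> (\<exists>m. CP i t0 c m \<and> L = 2 * pi * (snd (tr i t0 (Suc m)) - t0))"
proof -
  have "snd (tr i t0 (Suc m)) = t0 + L / (2 * pi) \<longleftrightarrow> L = 2 * pi * (snd (tr i t0 (Suc m)) - t0)" for m
    using pi_gt_zero by (auto simp: field_simps)
  then show ?thesis unfolding path_lens_def CP_def by auto
qed

lemma sd_eq: assumes "i<n" "CP i t0 c M" "\<And>m. CP i t0 c m \<Longrightarrow> M \<le> m"
  shows "simple_dist z E f g i t0 c = 2 * pi * (snd (tr i t0 (Suc M)) - t0)"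
  unfolding simple_dist_def
proof (rule Least_equality)
  show "2 * pi * (snd (tr i t0 (Suc M)) - t0) \<in> path_lens z E f g i t0 c" using pl_iff assms(2) by blast
  fix L assume "L \<in> path_lens z E f g i t0 c"
  then obtain m where m: "CP i t0 c m" "L = 2 * pi * (snd (tr i t0 (Suc m)) - t0)" using pl_iff by blast
  have "snd (tr i t0 (Suc M)) \<le> snd (tr i t0 (Suc m))" using tr_mono_le[OF assms(1)] assms(3)[OF m(1)] by simp
  then show "2 * pi * (snd (tr i t0 (Suc M)) - t0) \<le> L" unfolding m(2) using pi_gt_zero by simp
qed

lemma pl_struct: assumes "i<n" "i'<n" "ring z E f g i t0 \<noteq> ring z E f g i' t0'"
    "ring_len z E f g i t0 = 2 * pi * real l" "ring_len z E f g i' t0' = 2 * pi * real l'"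
    "CP i t0 c M" "\<And>m. CP i t0 c m \<Longrightarrow> M \<le> m" "CP i' t0' c M'"
  shows "L \<in> path_lens z E f g i t0 c \<longleftrightarrow> (\<exists>k::nat. L = 2 * pi * (snd (tr i t0 (Suc M)) - t0) + 2 * pi * real l * real k)"
proof
  note X = orbit_data[OF assms(1,4)] and Y = orbit_data[OF assms(2,5)]
  assume "L \<in> path_lens z E f g i t0 c"
  then obtain m where m: "CP i t0 c m" "L = 2 * pi * (snd (tr i t0 (Suc m)) - t0)" using pl_iff by blast
  obtain k :: nat where "snd (tr i t0 (Suc m)) = snd (tr i t0 (Suc M)) + real l * real k"
    using cross_struct[OF assms(1-3) X Y(1,2) assms(6,7,8) m(1)] by blast
  then have "L = 2 * pi * (snd (tr i t0 (Suc M)) - t0) + 2 * pi * real l * real k" using m(2) by (simp add: algebra_simps)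
  then show "\<exists>k::nat. L = 2 * pi * (snd (tr i t0 (Suc M)) - t0) + 2 * pi * real l * real k" by blast
next
  note X = orbit_data[OF assms(1,4)]
  assume "\<exists>k::nat. L = 2 * pi * (snd (tr i t0 (Suc M)) - t0) + 2 * pi * real l * real k"
  then obtain k :: nat where k: "L = 2 * pi * (snd (tr i t0 (Suc M)) - t0) + 2 * pi * real l * real k" by blast
  obtain m where m: "CP i t0 c m" "snd (tr i t0 (Suc m)) = snd (tr i t0 (Suc M)) + real l * real k"
    using cross_gen[OF assms(1) X(1,2) assms(6)] by blast
  have "L = 2 * pi * (snd (tr i t0 (Suc m)) - t0)" using k m(2) by (simp add: algebra_simps)
  then show "L \<in> path_lens z E f g i t0 c" using pl_iff m(1) by blast
qed

end

theorem theorem2: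
  fixes n :: nat and z :: "nat \<Rightarrow> complex" and eps :: real
    and E :: "(nat \<times> nat) set" and f :: "nat \<Rightarrow> real" and g :: "nat \<Rightarrow> int"
    and i i' :: nat and t0 :: real and c :: complex and l l' :: nat
  assumes "SCS n z eps E f g"
    and "i < n" and "i' < n"
    and "ring z E f g i t0 \<noteq> ring z E f g i' t0"
    and "crossing_between z E f g i i' t0 c"
    and "0 < l" and "ring_len z E f g i t0 = 2 * pi * real l"
    and "0 < l'" and "ring_len z E f g i' t0 = 2 * pi * real l'"
  shows "(\<exists>s::int. simple_dist z E f g i t0 c - simple_dist z E f g i' t0 c = 2 * pi * of_int s)
       \<and> (\<forall>s::int. simple_dist z E f g i t0 c - simple_dist z E f g i' t0 c = 2 * pi * of_int s \<longrightarrow>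
            (prevents_via z E f g i i' t0 c \<longleftrightarrow> int (gcd l l') dvd s))"
proof -
  have cb: "\<exists>a b. (a, b) \<in> E \<and> c = crossing z a b" "path_lens z E f g i t0 c \<noteq> {}" "path_lens z E f g i' t0 c \<noteq> {}"
    using assms(5) unfolding crossing_between_def by auto
  have "E \<noteq> {}" using cb(1) by auto
  interpret scs n z eps E f g using assms(1) \<open>E \<noteq> {}\<close> by unfold_locales
  have ex1: "\<exists>m. CP i t0 c m" using cb(2) pl_iff by blast
  have ex2: "\<exists>m. CP i' t0 c m" using cb(3) pl_iff by blast
  define M where "M = (LEAST m. CP i t0 c m)"
  define M' where "M' = (LEAST m. CP i' t0 c m)"
  have M: "CP i t0 c M" "\<And>m. CP i t0 c m \<Longrightarrow> M \<le> m" unfolding M_def using LeastI_ex[OF ex1] Least_le by auto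
  have M': "CP i' t0 c M'" "\<And>m. CP i' t0 c m \<Longrightarrow> M' \<le> m" unfolding M'_def using LeastI_ex[OF ex2] Least_le by auto
  define T where "T = snd (tr i t0 (Suc M))"
  define T' where "T' = snd (tr i' t0 (Suc M'))"
  have d: "simple_dist z E f g i t0 c = 2 * pi * (T - t0)" unfolding T_def using sd_eq[OF assms(2) M] .
  have d': "simple_dist z E f g i' t0 c = 2 * pi * (T' - t0)" unfolding T'_def using sd_eq[OF assms(3) M'] .
  obtain q where q: "T' = T + of_int q" unfolding T_def T'_def using cross_pair(2)[OF assms(2,3) M(1) M'(1)] by blast
  have part1: "simple_dist z E f g i t0 c - simple_dist z E f g i' t0 c = 2 * pi * of_int (-q)"
    unfolding d d' q by (simp add: algebra_simps)
  have PX: "L \<in> path_lens z E f g i t0 c \<longleftrightarrow> (\<exists>k::nat. L = 2 * pi * (T - t0) + 2 * pi * real l * real k)" for L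
    unfolding T_def using pl_struct[OF assms(2,3,4,7,9) M M'(1)] .
  have PY: "L \<in> path_lens z E f g i' t0 c \<longleftrightarrow> (\<exists>k::nat. L = 2 * pi * (T' - t0) + 2 * pi * real l' * real k)" for L
    unfolding T'_def using pl_struct[OF assms(3,2) assms(4)[symmetric] assms(9,7) M' M(1)] .
  have part2: "prevents_via z E f g i i' t0 c \<longleftrightarrow> int (gcd l l') dvd s"
    if s: "simple_dist z E f g i t0 c - simple_dist z E f g i' t0 c = 2 * pi * of_int s" for s
  proof -
    have "2 * pi * (T - T') = 2 * pi * of_int s" using s unfolding d d' by (simp add: algebra_simps)
    then have sT: "T - T' = of_int s" by simp
    have "prevents_via z E f g i i' t0 c \<longleftrightarrow>
      (\<exists>k k'::nat. 2 * pi * (T - t0) + 2 * pi * real l * real k = 2 * pi * (T' - t0) + 2 * pi * real l' * real k')"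
      unfolding prevents_via_def PX PY by blast
    also have "\<dots> \<longleftrightarrow> (\<exists>k k'::nat. s + int l * int k = int l' * int k')"
    proof -
      have "2 * pi * (T - t0) + 2 * pi * real l * real k = 2 * pi * (T' - t0) + 2 * pi * real l' * real k'
          \<longleftrightarrow> s + int l * int k = int l' * int k'" for k k' :: nat
      proof -
        have "2 * pi * (T - t0) + 2 * pi * real l * real k = 2 * pi * (T' - t0) + 2 * pi * real l' * real k'
            \<longleftrightarrow> 2 * pi * ((T - T') + real l * real k) = 2 * pi * (real l' * real k')"
          by (simp add: algebra_simps)
        also have "\<dots> \<longleftrightarrow> (T - T') + real l * real k = real l' * real k'" by simp
        also have "\<dots> \<longleftrightarrow> of_int (s + int l * int k) = (of_int (int l' * int k') :: real)" unfolding sT by simp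
        also have "\<dots> \<longleftrightarrow> s + int l * int k = int l' * int k'" by (rule of_int_eq_iff)
        finally show ?thesis .
      qed
      then show ?thesis by simp
    qed
    also have "\<dots> \<longleftrightarrow> int (gcd l l') dvd s" by (rule nt_gcd[OF assms(6,8)])
    finally show ?thesis .
  qed
  show ?thesis using part1 part2 by blast
qed

end
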